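(* For every angle $0<\alpha<\pi$ there is $p_0(\alpha)$ such that for every prime $p>p_0(\alpha)$ the isosceles triangle whose angle at the apex (between the two equal sides) equals $\alpha$ is Euclidean sub-$p$-toral.
   Context: A $p$-torus is a group isomorphic to $(\mathbb{Z}_p)^\alpha$ for some $\alpha\ge1$. A set $X\subset\mathbb{R}^k$ is Euclidean sub-$p$-toral if there exist $n\ge k$, a $p$-torus $G$ and an action of $G$ on $\mathbb{R}^n$ by isometries such that $X$ (viewed in $\mathbb{R}^n$ via the standard inclusion $\mathbb{R}^k\subset\mathbb{R}^n$) is contained in a single $G$-orbit. A triangle is identified with its set of three vertices; being sub-$p$-toral is invariant under isometries. *)

theory Defs
  imports Complex_Main "HOL-Computational_Algebra.Primes"
begin

text \<open>Points of R^n are modelled as functions nat => real vanishing from index n on;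
  the standard inclusion R^k in R^n (k <= n) is then literal set inclusion.\<close>

definition Rn :: "nat \<Rightarrow> (nat \<Rightarrow> real) set" where
  "Rn n = {x. \<forall>i\<ge>n. x i = 0}"

definition edist :: "nat \<Rightarrow> (nat \<Rightarrow> real) \<Rightarrow> (nat \<Rightarrow> real) \<Rightarrow> real" where
  "edist n x y = sqrt (\<Sum>i<n. (x i - y i)^2)"

text \<open>The p-torus (Z_p)^a, concretely: functions nat => nat with values < p on indices < a
  and 0 elsewhere, with componentwise addition mod p.\<close>

definition ptorus :: "nat \<Rightarrow> nat \<Rightarrow> (nat \<Rightarrow> nat) set" where
  "ptorus p a = {g. \<forall>i. (i < a \<longrightarrow> g i < p) \<and> (a \<le> i \<longrightarrow> g i = 0)}"

definition ptorus_add :: "nat \<Rightarrow> (nat \<Rightarrow> nat) \<Rightarrow> (nat \<Rightarrow> nat) \<Rightarrow> (nat \<Rightarrow> nat)" where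
  "ptorus_add p g h = (\<lambda>i. (g i + h i) mod p)"

definition isometric_ptorus_action ::
  "nat \<Rightarrow> nat \<Rightarrow> nat \<Rightarrow> ((nat \<Rightarrow> nat) \<Rightarrow> (nat \<Rightarrow> real) \<Rightarrow> (nat \<Rightarrow> real)) \<Rightarrow> bool" where
  "isometric_ptorus_action p a n act \<longleftrightarrow>
     (\<forall>g\<in>ptorus p a. \<forall>x\<in>Rn n. act g x \<in> Rn n) \<and>
     (\<forall>x\<in>Rn n. act (\<lambda>i. 0) x = x) \<and>
     (\<forall>g\<in>ptorus p a. \<forall>h\<in>ptorus p a. \<forall>x\<in>Rn n.
        act (ptorus_add p g h) x = act g (act h x)) \<and>
     (\<forall>g\<in>ptorus p a. \<forall>x\<in>Rn n. \<forall>y\<in>Rn n. edist n (act g x) (act g y) = edist n x y)"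

definition euclidean_sub_ptoral :: "nat \<Rightarrow> nat \<Rightarrow> (nat \<Rightarrow> real) set \<Rightarrow> bool" where
  "euclidean_sub_ptoral p k X \<longleftrightarrow> X \<subseteq> Rn k \<and>
     (\<exists>n\<ge>k. \<exists>a\<ge>1. \<exists>act. isometric_ptorus_action p a n act \<and>
        (\<exists>x0\<in>Rn n. X \<subseteq> (\<lambda>g. act g x0) ` ptorus p a))"

definition pt2 :: "real \<Rightarrow> real \<Rightarrow> (nat \<Rightarrow> real)" where
  "pt2 u v = (\<lambda>i. if i = 0 then u else if i = 1 then v else 0)"

definition isosceles_triangle :: "real \<Rightarrow> real \<Rightarrow> (nat \<Rightarrow> real) set" where
  "isosceles_triangle L t =
     {pt2 0 0, pt2 (L * cos (t/2)) (L * sin (t/2)), pt2 (L * cos (t/2)) (- L * sin (t/2))}"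

end

theory Submission
  imports Defs
begin

lemma cos_shift: "cos (x - 2*pi*real N) = cos x" "sin (x - 2*pi*real N) = sin x"
proof -
  have e: "2*pi*real N = 2*real N*pi" by simp
  show "cos (x - 2*pi*real N) = cos x" unfolding e cos_diff by simp
  show "sin (x - 2*pi*real N) = sin x" unfolding e sin_diff by simp
qed

definition rot :: "real \<Rightarrow> real \<Rightarrow> real \<Rightarrow> real \<Rightarrow> (nat\<Rightarrow>real) \<Rightarrow> (nat\<Rightarrow>real)" where
"rot a1 a2 c1 c2 v = (\<lambda>i. if i=0 then c1 + cos a1 * (v 0 - c1) - sin a1 * v 1
  else if i=1 then sin a1 * (v 0 - c1) + cos a1 * v 1
  else if i=2 then c2 + cos a2 * (v 2 - c2) - sin a2 * v 3
  else if i=3 then sin a2 * (v 2 - c2) + cos a2 * v 3 else 0)"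

definition fm :: "real\<Rightarrow>real\<Rightarrow>real\<Rightarrow>real\<Rightarrow>(nat\<Rightarrow>real)\<Rightarrow>(nat\<Rightarrow>real)" where
"fm p q r s v = (\<lambda>i. if i=0 then p*v 0 + q*v 2 else if i=1 then r*v 1 + s*v 3
   else if i=2 then -q*v 0 + p*v 2 else if i=3 then -s*v 1 + r*v 3 else 0)"

lemma Rn4_eq: "v \<in> Rn 4 \<Longrightarrow> v = (\<lambda>i. if i=0 then v 0 else if i=1 then v 1 else if i=2 then v 2 else if i=3 then v 3 else 0)"
  unfolding Rn_def by (auto simp: fun_eq_iff)

lemma rot_Rn: "rot a1 a2 c1 c2 v \<in> Rn 4" unfolding rot_def Rn_def by auto
lemma fm_Rn: "fm p q r s v \<in> Rn 4" unfolding fm_def Rn_def by auto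

lemma rot_add: "rot a1 a2 c1 c2 (rot b1 b2 c1 c2 v) = rot (a1+b1) (a2+b2) c1 c2 v"
  unfolding rot_def by (auto simp: fun_eq_iff cos_add sin_add algebra_simps)

lemma rot_0: "v \<in> Rn 4 \<Longrightarrow> rot 0 0 c1 c2 v = v"
  unfolding rot_def Rn_def by (auto simp: fun_eq_iff)

lemma fm_inv: assumes "p^2+q^2=1" "r^2+s^2=1" "v \<in> Rn 4"
  shows "fm p q r s (fm p (-q) r (-s) v) = v" "fm p (-q) r (-s) (fm p q r s v) = v"
proof -
  have a: "p*p+q*q=1" "r*r+s*s=1" using assms by (simp_all add: power2_eq_square)
  have b: "x*p*p+x*q*q = x" "x*r*r+x*s*s = x" for x using a
    by (metis distrib_left mult.assoc mult.right_neutral)+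
  have b2: "p*(p*x)+q*(q*x) = x" "r*(r*x)+s*(s*x) = x" for x using b[of x] by (simp_all add: algebra_simps)
  show "fm p q r s (fm p (-q) r (-s) v) = v"
    using assms(3) unfolding fm_def Rn_def
    by (auto simp: fun_eq_iff algebra_simps b b2)
  show "fm p (-q) r (-s) (fm p q r s v) = v"
    using assms(3) unfolding fm_def Rn_def
    by (auto simp: fun_eq_iff algebra_simps b b2)
qed

lemma sum4: "(\<Sum>i<(4::nat). f i) = f 0 + f 1 + f 2 + (f 3::real)"
  by (simp add: numeral_eq_Suc)

lemma rot_iso: "edist 4 (rot a1 a2 c1 c2 x) (rot a1 a2 c1 c2 y) = edist 4 x y"
proof -
  have k: "(c*u - s*w)^2 + (s*u+c*w)^2 = (c^2+s^2)*(u^2+w^2)" for c s u w :: real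
    by (simp add: power2_eq_square algebra_simps)
  have k1: "(cos a * u - sin a * w)^2 + (sin a * u+cos a * w)^2 = u^2+w^2" for a u w :: real
    using k[of "cos a" u "sin a" w] by simp
  have "(c1 + cos a1 * (x 0 - c1) - sin a1 * x 1 - (c1 + cos a1 * (y 0 - c1) - sin a1 * y 1))^2
     + (sin a1 * (x 0 - c1) + cos a1 * x 1 - (sin a1 * (y 0 - c1) + cos a1 * y 1))^2
     = (x 0 - y 0)^2 + (x 1 - y 1)^2"
    using k1[of a1 "x 0 - y 0" "x 1 - y 1"] by (simp add: algebra_simps)
  moreover have "(c2 + cos a2 * (x 2 - c2) - sin a2 * x 3 - (c2 + cos a2 * (y 2 - c2) - sin a2 * y 3))^2
     + (sin a2 * (x 2 - c2) + cos a2 * x 3 - (sin a2 * (y 2 - c2) + cos a2 * y 3))^2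
     = (x 2 - y 2)^2 + (x 3 - y 3)^2"
    using k1[of a2 "x 2 - y 2" "x 3 - y 3"] by (simp add: algebra_simps)
  ultimately show ?thesis unfolding edist_def sum4 rot_def by simp
qed

lemma fm_iso: assumes "p^2+q^2=1" "r^2+s^2=1"
  shows "edist 4 (fm p q r s x) (fm p q r s y) = edist 4 x y"
proof -
  have k: "(c*u + s*w)^2 + (-s*u+c*w)^2 = (c^2+s^2)*(u^2+w^2)" for c s u w :: real
    by (simp add: power2_eq_square algebra_simps)
  have "(p * x 0 + q * x 2 - (p * y 0 + q * y 2))^2 + (-q * x 0 + p * x 2 - (-q * y 0 + p * y 2))^2
     = (x 0 - y 0)^2 + (x 2 - y 2)^2"
    using k[of p "x 0 - y 0" q "x 2 - y 2"] assms by (simp add: algebra_simps)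
  moreover have "(r * x 1 + s * x 3 - (r * y 1 + s * y 3))^2 + (-s * x 1 + r * x 3 - (-s * y 1 + r * y 3))^2
     = (x 1 - y 1)^2 + (x 3 - y 3)^2"
    using k[of r "x 1 - y 1" s "x 3 - y 3"] assms by (simp add: algebra_simps)
  moreover have "(\<Sum>i<(4::nat). (fm p q r s x i - fm p q r s y i)^2) =
    (p * x 0 + q * x 2 - (p * y 0 + q * y 2))^2 + (r * x 1 + s * x 3 - (r * y 1 + s * y 3))^2
    + (-q * x 0 + p * x 2 - (-q * y 0 + p * y 2))^2 + (-s * x 1 + r * x 3 - (-s * y 1 + r * y 3))^2"
    unfolding sum4 fm_def by simp
  ultimately have "(\<Sum>i<(4::nat). (fm p q r s x i - fm p q r s y i)^2) = (\<Sum>i<(4::nat). (x i - y i)^2)"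
    unfolding sum4 by linarith
  then show ?thesis unfolding edist_def by (rule arg_cong[where f=sqrt])
qed

lemma mod_angle: assumes "p > 0" "f = 2*pi*real m/real p"
  shows "real (k mod p) * f = real k * f - 2*pi*real (m*(k div p))"
proof -
  have kk: "k = p * (k div p) + k mod p" by simp
  have "real (p * (k div p) + k mod p) = real p * real (k div p) + real (k mod p)" by (simp only: of_nat_add of_nat_mult)
  moreover have "real k = real (p * (k div p) + k mod p)" using kk by (rule arg_cong)
  ultimately have e: "real (k mod p) = real k - real p * real (k div p)" by linarith
  have p0: "real p \<noteq> 0" using assms by simp
  have "real (k mod p) * f = (real k - real p * real (k div p)) * (2*pi*real m/real p)"
    unfolding e assms(2) ..
  also have "\<dots> = real k * (2*pi*real m/real p) - 2*pi*(real m * real (k div p))"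
    using p0 by (simp add: field_simps)
  finally show ?thesis using assms(2) by simp
qed

lemma rot_mod: assumes "p > 0" "f1 = 2*pi*real m1/real p" "f2 = 2*pi*real m2/real p"
  shows "rot (real (k mod p) * f1) (real (k mod p) * f2) c1 c2 v = rot (real k * f1) (real k * f2) c1 c2 v"
  unfolding mod_angle[OF assms(1,2)] mod_angle[OF assms(1,3)] rot_def cos_shift ..

lemma construction:
  fixes p :: nat
  assumes p1: "p > 1" and X: "X > 0" "Y > 0"
  and Xd: "X = sqrt ((c1 - cos f1 * c1)^2 + (c2 - cos f2 * c2)^2)"
  and Yd: "Y = sqrt ((c1 * sin f1)^2 + (c2 * sin f2)^2)"
  and f: "f1 = 2*pi*real m1/real p" "f2 = 2*pi*real m2/real p"
  shows "euclidean_sub_ptoral p 2 {pt2 0 0, pt2 X Y, pt2 X (-Y)}"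
proof -
  define x1 where "x1 = c1 - cos f1 * c1"
  define x2 where "x2 = c2 - cos f2 * c2"
  define y1 where "y1 = c1 * sin f1"
  define y2 where "y2 = c2 * sin f2"
  define P where "P = x1 / X"
  define Q where "Q = x2 / X"
  define R where "R = y1 / Y"
  define S where "S = y2 / Y"
  have XX: "X^2 = x1^2 + x2^2" using Xd unfolding x1_def x2_def by simp
  have YY: "Y^2 = y1^2 + y2^2" using Yd unfolding y1_def y2_def by simp
  have PQ: "P^2+Q^2 = 1"
  proof -
    have "P^2+Q^2 = (x1^2+x2^2)/X^2" unfolding P_def Q_def by (simp add: power_divide add_divide_distrib)
    also have "\<dots> = X^2/X^2" using XX by simp
    also have "\<dots> = 1" using X by simp
    finally show ?thesis .
  qed
  have RS: "R^2+S^2 = 1"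
  proof -
    have "R^2+S^2 = (y1^2+y2^2)/Y^2" unfolding R_def S_def by (simp add: power_divide add_divide_distrib)
    also have "\<dots> = Y^2/Y^2" using YY by simp
    also have "\<dots> = 1" using X by simp
    finally show ?thesis .
  qed
  define act where "act = (\<lambda>(g::nat\<Rightarrow>nat) v. fm P Q R S (rot (real (g 0) * f1) (real (g 0) * f2) c1 c2 (fm P (-Q) R (-S) v)))"
  have p0: "p > 0" using p1 by simp
  have isom: "isometric_ptorus_action p 1 4 act"
    unfolding isometric_ptorus_action_def
  proof (intro conjI ballI)
    fix g x assume "x \<in> Rn 4" show "act g x \<in> Rn 4" unfolding act_def by (rule fm_Rn)
  next
    fix x assume "x \<in> Rn 4" then show "act (\<lambda>i. 0) x = x"
      unfolding act_def using rot_0 fm_inv[OF PQ RS] fm_Rn by simp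
  next
    fix g h x assume "g \<in> ptorus p 1" "h \<in> ptorus p 1" "x \<in> Rn 4"
    have "act g (act h x) = fm P Q R S (rot (real (g 0) * f1) (real (g 0) * f2) c1 c2
        (rot (real (h 0) * f1) (real (h 0) * f2) c1 c2 (fm P (-Q) R (-S) x)))"
      unfolding act_def using fm_inv(2)[OF PQ RS rot_Rn] by simp
    also have "\<dots> = fm P Q R S (rot (real (g 0 + h 0) * f1) (real (g 0 + h 0) * f2) c1 c2 (fm P (-Q) R (-S) x))"
      unfolding rot_add by (simp add: algebra_simps)
    also have "\<dots> = act (ptorus_add p g h) x"
      unfolding act_def ptorus_add_def rot_mod[OF p0 f] ..
    finally show "act (ptorus_add p g h) x = act g (act h x)" ..
  next
    fix g x y assume "x \<in> Rn 4" "y \<in> Rn 4"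
    show "edist 4 (act g x) (act g y) = edist 4 x y"
      unfolding act_def fm_iso[OF PQ RS] rot_iso
      using fm_iso[of P "-Q" R "-S"] PQ RS by simp
  qed
  define z where "z = (\<lambda>i::nat. 0::real)"
  have z: "z \<in> Rn 4" unfolding z_def Rn_def by simp
  define g1 where "g1 = (\<lambda>i::nat. if i = 0 then 1 else (0::nat))"
  define g2 where "g2 = (\<lambda>i::nat. if i = 0 then p - 1 else (0::nat))"
  have g1: "g1 \<in> ptorus p 1" unfolding g1_def ptorus_def using p1 by auto
  have g2: "g2 \<in> ptorus p 1" unfolding g2_def ptorus_def using p1 by auto
  have g0: "(\<lambda>i::nat. 0::nat) \<in> ptorus p 1" unfolding ptorus_def using p1 by auto
  have fz: "fm P (-Q) R (-S) z = z" unfolding fm_def z_def by auto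
  have e0: "act (\<lambda>i. 0) z = pt2 0 0"
  proof -
    have "act (\<lambda>i. 0) z = z" unfolding act_def using rot_0[OF fm_Rn] fm_inv[OF PQ RS z] by simp
    then show ?thesis by (simp add: z_def pt2_def fun_eq_iff)
  qed
  have PX1: "P * x1 + Q * x2 = X"
  proof -
    have "P * x1 + Q * x2 = (x1^2+x2^2)/X" unfolding P_def Q_def by (simp add: power2_eq_square add_divide_distrib)
    also have "\<dots> = X^2/X" using XX by simp
    also have "\<dots> = X" using X by (simp add: power2_eq_square)
    finally show ?thesis .
  qed
  have PX3: "R * y1 + S * y2 = Y"
  proof -
    have "R * y1 + S * y2 = (y1^2+y2^2)/Y" unfolding R_def S_def by (simp add: power2_eq_square add_divide_distrib)
    also have "\<dots> = Y^2/Y" using YY by simp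
    also have "\<dots> = Y" using X by (simp add: power2_eq_square)
    finally show ?thesis .
  qed
  have PX2: "- Q * x1 + P * x2 = 0" "- S * y1 + R * y2 = 0"
    unfolding P_def Q_def R_def S_def by (simp_all add: field_simps)
  have PX4: "R * (-y1) + S * (-y2) = -Y" "- S * (-y1) + R * (-y2) = 0" using PX3 PX2 by simp_all
  note PX = PX1 PX2 PX3 PX4
  have e1: "act g1 z = pt2 X (-Y)"
  proof -
    have "act g1 z = fm P Q R S (\<lambda>i. if i=0 then x1 else if i=1 then -y1 else if i=2 then x2 else if i=3 then -y2 else 0)"
      unfolding act_def fz by (rule arg_cong[where f="fm P Q R S"]) (simp add: g1_def rot_def z_def x1_def x2_def y1_def y2_def fun_eq_iff)
    also have "\<dots> = pt2 X (-Y)" unfolding fm_def pt2_def using PX by (simp add: fun_eq_iff)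
    finally show ?thesis .
  qed
  have per: "cos (real (p - Suc 0) * f) = cos f" "sin (real (p - Suc 0) * f) = - sin f"
     if "f = 2*pi*real m/real p" for f m
  proof -
    have "real (p - Suc 0) * f = 2*pi*real m - f" using that p1 by (simp add: of_nat_diff field_simps)
    moreover have "cos (2*pi*real m - f) = cos (f - 2*pi*real m)" by (metis cos_minus minus_diff_eq)
    moreover have "sin (2*pi*real m - f) = - sin (f - 2*pi*real m)" by (metis sin_minus minus_diff_eq)
    ultimately show "cos (real (p - Suc 0) * f) = cos f" "sin (real (p - Suc 0) * f) = - sin f"
      using cos_shift[of f m] by simp_all
  qed
  have e2: "act g2 z = pt2 X Y"
  proof -
    have "act g2 z = fm P Q R S (\<lambda>i. if i=0 then x1 else if i=1 then y1 else if i=2 then x2 else if i=3 then y2 else 0)"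
      unfolding act_def fz by (rule arg_cong[where f="fm P Q R S"]) (simp add: g2_def rot_def z_def x1_def x2_def y1_def y2_def fun_eq_iff per[OF f(1)] per[OF f(2)])
    also have "\<dots> = pt2 X Y" unfolding fm_def pt2_def using PX by (simp add: fun_eq_iff)
    finally show ?thesis .
  qed
  show ?thesis unfolding euclidean_sub_ptoral_def
  proof (intro conjI)
    show "{pt2 0 0, pt2 X Y, pt2 X (- Y)} \<subseteq> Rn 2" unfolding pt2_def Rn_def by auto
    show "\<exists>n\<ge>2. \<exists>a\<ge>1. \<exists>act. isometric_ptorus_action p a n act \<and>
        (\<exists>x0\<in>Rn n. {pt2 0 0, pt2 X Y, pt2 X (- Y)} \<subseteq> (\<lambda>g. act g x0) ` ptorus p a)"
    proof -
      have "{pt2 0 0, pt2 X Y, pt2 X (- Y)} \<subseteq> (\<lambda>g. act g z) ` ptorus p 1"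
        using image_eqI[where f="\<lambda>g. act g z", OF e0[symmetric] g0] image_eqI[where f="\<lambda>g. act g z", OF e1[symmetric] g1] image_eqI[where f="\<lambda>g. act g z", OF e2[symmetric] g2] by blast
      then have "isometric_ptorus_action p 1 4 act \<and> (\<exists>x0\<in>Rn 4. {pt2 0 0, pt2 X Y, pt2 X (- Y)} \<subseteq> (\<lambda>g. act g x0) ` ptorus p 1)"
        using isom z by blast
      moreover have "(4::nat) \<ge> 2" "(1::nat) \<ge> 1" by simp_all
      ultimately show ?thesis by blast
    qed
  qed
qed


lemma quant:
  fixes t L e :: real
  assumes t: "0 < t" "t < pi" and L: "L > 0" and e: "0 < e" "e < t" "e < (pi - t)/2"
  shows "\<exists>c1 c2. L * cos (t/2) = sqrt ((c1 - cos (pi - e) * c1)^2 + (c2 - cos (2*e) * c2)^2)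
     \<and> L * sin (t/2) = sqrt ((c1 * sin (pi - e))^2 + (c2 * sin (2*e))^2)"
proof -
  define c where "c = cos (t/2)"
  define s where "s = sin (t/2)"
  have c0: "c > 0" unfolding c_def using t by (intro cos_gt_zero_pi) auto
  have s0: "s > 0" unfolding s_def using t by (intro sin_gt_zero) auto
  have se: "sin e > 0" using e t by (intro sin_gt_zero) auto
  have ce: "cos e > 0" using e t by (intro cos_gt_zero_pi) auto
  define A1 where "A1 = (1 - cos (pi - e))^2"
  define B1 where "B1 = (sin (pi - e))^2"
  define A2 where "A2 = (1 - cos (2*e))^2"
  define B2 where "B2 = (sin (2*e))^2"
  define u1 where "u1 = c^2*B2 - s^2*A2"
  define u2 where "u2 = s^2*A1 - c^2*B1"
  define D where "D = u1*A1 + u2*A2"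
  have A1': "A1 = (1 + cos e)^2" unfolding A1_def by simp
  have B1': "B1 = (sin e)^2" unfolding B1_def by simp
  have A2': "A2 = 4 * (sin e)^4" unfolding A2_def cos_double_sin by (simp add: power2_eq_square power4_eq_xxxx)
  have B2': "B2 = 4 * (sin e)^2 * (cos e)^2" unfolding B2_def sin_double by (simp add: power2_eq_square)
  have cp: "c * cos e - s * sin e > 0"
  proof -
    have "c * cos e - s * sin e = cos (t/2 + e)" unfolding c_def s_def cos_add by simp
    moreover have "cos (t/2 + e) > 0" using e t by (intro cos_gt_zero_pi) auto
    ultimately show ?thesis by simp
  qed
  have u1p: "u1 > 0"
  proof -
    have "u1 = 4 * (sin e)^2 * ((c * cos e)^2 - (s * sin e)^2)"
      unfolding u1_def A2' B2' by (simp add: power2_eq_square power4_eq_xxxx algebra_simps)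
    moreover have "(s * sin e)^2 < (c * cos e)^2"
      using cp s0 se by (intro power_strict_mono) auto
    ultimately show ?thesis using se by simp
  qed
  have u2p: "u2 \<ge> 0"
  proof -
    have "s * (1 + cos e) - c * sin e = sin (t/2) + sin (t/2 - e)"
      unfolding c_def s_def sin_diff by (simp add: algebra_simps)
    also have "\<dots> = 2 * sin ((t/2 + (t/2 - e))/2) * cos ((t/2 - (t/2 - e))/2)" by (rule sin_plus_sin)
    also have "\<dots> \<ge> 0"
    proof -
      have "sin ((t/2 + (t/2 - e))/2) > 0" using e t by (intro sin_gt_zero) auto
      moreover have "cos ((t/2 - (t/2 - e))/2) > 0" using e t by (intro cos_gt_zero_pi) auto
      ultimately show ?thesis by simp
    qed
    finally have "c * sin e \<le> s * (1 + cos e)" by simp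
    then have "(c * sin e)^2 \<le> (s * (1 + cos e))^2"
      using c0 se by (intro power_mono) auto
    then show ?thesis unfolding u2_def A1' B1' by (simp add: power_mult_distrib)
  qed
  have A1p: "A1 > 0" unfolding A1' using ce by simp
  have A2p: "A2 \<ge> 0" unfolding A2_def by simp
  have Dp: "D > 0" unfolding D_def using u1p A1p u2p A2p
    by (meson add_pos_nonneg mult_pos_pos mult_nonneg_nonneg)
  have key: "c^2 * (u1*B1 + u2*B2) = s^2 * D" unfolding D_def u1_def u2_def by (simp add: algebra_simps)
  define c1 where "c1 = sqrt (L^2*c^2*u1/D)"
  define c2 where "c2 = sqrt (L^2*c^2*u2/D)"
  have c1sq: "c1^2 = L^2*c^2*u1/D" unfolding c1_def using u1p Dp by simp
  have c2sq: "c2^2 = L^2*c^2*u2/D" unfolding c2_def using u2p Dp by simp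
  have "(c1 - cos (pi - e) * c1)^2 + (c2 - cos (2*e) * c2)^2 = c1^2*A1 + c2^2*A2"
    unfolding A1_def A2_def by (simp add: power2_eq_square algebra_simps)
  also have "\<dots> = (L^2*c^2/D) * (u1*A1+u2*A2)" unfolding c1sq c2sq by (simp add: algebra_simps add_divide_distrib)
  also have "\<dots> = (L*c)^2" using Dp unfolding D_def[symmetric] by (simp add: power_mult_distrib)
  finally have X: "(c1 - cos (pi - e) * c1)^2 + (c2 - cos (2*e) * c2)^2 = (L*c)^2" .
  have "(c1 * sin (pi - e))^2 + (c2 * sin (2*e))^2 = c1^2*B1 + c2^2*B2"
    unfolding B1_def B2_def by (simp add: power_mult_distrib)
  also have "\<dots> = (L^2/D)*(c^2*(u1*B1+u2*B2))" unfolding c1sq c2sq by (simp add: algebra_simps add_divide_distrib)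
  also have "\<dots> = (L^2/D)*(s^2*D)" unfolding key by simp
  also have "\<dots> = (L*s)^2" using Dp by (simp add: power_mult_distrib)
  finally have Y: "(c1 * sin (pi - e))^2 + (c2 * sin (2*e))^2 = (L*s)^2" .
  show ?thesis
    apply (rule exI[of _ c1], rule exI[of _ c2])
    unfolding X Y using L c0 s0 by (simp add: c_def s_def)
qed


theorem lemma5:
  fixes t :: real
  assumes "0 < t" and "t < pi"
  shows "\<exists>p0::nat. \<forall>p::nat. prime p \<and> p > p0 \<longrightarrow>
           (\<forall>L::real. L > 0 \<longrightarrow> euclidean_sub_ptoral p 2 (isosceles_triangle L t))"
proof -
  define d where "d = min t ((pi - t)/2)"
  have d0: "d > 0" unfolding d_def using assms by simp
  define p0 where "p0 = nat (ceiling (pi/d)) + 2"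
  show ?thesis
  proof (intro exI[of _ p0] allI impI)
    fix p :: nat and L :: real
    assume pp: "prime p \<and> p0 < p" and L: "L > 0"
    have p2: "p > 2" using pp unfolding p0_def by simp
    have "odd p" using pp p2 prime_odd_nat by blast
    then obtain k where k: "p = 2*k+1" using oddE by blast
    have "real p > pi/d"
    proof -
      have "pi/d \<le> real (nat (ceiling (pi/d)))" by linarith
      also have "\<dots> < real p" using pp unfolding p0_def by simp
      finally show ?thesis .
    qed
    then have "pi < real p * d" using d0 by (simp add: divide_less_eq mult.commute)
    then have ed: "pi / real p < d" using p2 by (simp add: divide_less_eq mult.commute)
    define e where "e = pi / real p"
    have e: "0 < e" "e < t" "e < (pi - t)/2" using ed p2 d_def unfolding e_def by auto
    obtain c1 c2 where cc: "L * cos (t/2) = sqrt ((c1 - cos (pi - e) * c1)^2 + (c2 - cos (2*e) * c2)^2)"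
       "L * sin (t/2) = sqrt ((c1 * sin (pi - e))^2 + (c2 * sin (2*e))^2)"
      using quant[OF assms L e] by blast
    have f1: "pi - e = 2*pi*real k/real p" unfolding e_def k by (simp add: field_simps)
    have f2: "2*e = 2*pi*real (1::nat)/real p" unfolding e_def by simp
    have X: "L * cos (t/2) > 0" using L assms by (intro mult_pos_pos cos_gt_zero_pi) auto
    have Y: "L * sin (t/2) > 0" using L assms by (intro mult_pos_pos sin_gt_zero) auto
    have "euclidean_sub_ptoral p 2 {pt2 0 0, pt2 (L * cos (t/2)) (L * sin (t/2)), pt2 (L * cos (t/2)) (- (L * sin (t/2)))}"
      using p2 by (intro construction[OF _ X Y cc f1 f2]) simp
    then show "euclidean_sub_ptoral p 2 (isosceles_triangle L t)"
      unfolding isosceles_triangle_def by simp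
  qed
qed

end
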